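(* There exists an absolute constant $C>0$ such that the following holds. Let $(p_1,y_1),\ldots,(p_T,y_T)\in[0,1]\times\{0,1\}$ be an arbitrary sequence and let $\mathcal D$ be the uniform distribution over these pairs. Let $m$ be a positive integer. For each $t$, independently round $p_t$ to $p_t'\sim\tau_m(p_t)$, and let $\mathcal D'$ be the uniform distribution over $(p_1',y_1),\ldots,(p_T',y_T)$. Then for every $\delta\in(0,1/(2m))$, with probability at least $1-\delta$, $$|\mathsf{SCDL}_m(\mathcal D')-\mathsf{SCDL}_m(\mathcal D)|\le C\Big(\sqrt{\tfrac{\log(1/\delta)}{T}}+(\log m)\sqrt{\tfrac{m\cdot\mathsf{SCDL}_m(\mathcal D)\log(1/\delta)}{T}}+\tfrac{m(\log m)\log(1/\delta)}{T}\Big).$$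
   Context: For $x\in\mathbb R$ write $x_+=\max\{x,0\}$. For $i\in\{0,\ldots,m\}$ let $w_i(p)=(1-|mp-i|)_+$. The randomized rounding $\tau_m(p)$ is the distribution on $\{0,1/m,\ldots,1\}$ with $\Pr[p'=i/m]=w_i(p)$ (so $\mathbb E[p'\mid p]=p$). For a distribution $\mathcal D$ of $(p,y)\in[0,1]\times\{0,1\}$ let $\pi_i=\mathbb E_{\mathcal D}[w_i(p)]$, $q_i=\mathbb E_{\mathcal D}[w_i(p)y]/\pi_i$ (terms with $\pi_i=0$ are $0$), and $$\mathsf{SCDL}_m(\mathcal D)=\max_{i=0,\ldots,m}\Big(\sum_{j=0}^{i}\pi_j\big(q_j-\tfrac{i+1}{m}\big)_+ +\sum_{j=i+1}^{m}\pi_j\big(\tfrac im-q_j\big)_+\Big).$$ *)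

theory Defs
  imports "HOL-Probability.Probability"
begin

definition wt :: "nat \<Rightarrow> nat \<Rightarrow> real \<Rightarrow> real" where
  "wt m i p = max (1 - \<bar>real m * p - real i\<bar>) 0"

definition tau :: "nat \<Rightarrow> real \<Rightarrow> real pmf" where
  "tau m p = map_pmf (\<lambda>i. real i / real m)
              (embed_pmf (\<lambda>i. if i \<le> m then wt m i p else 0))"

definition piw :: "nat \<Rightarrow> nat \<Rightarrow> (nat \<Rightarrow> real) \<Rightarrow> nat \<Rightarrow> real" where
  "piw m T p i = (\<Sum>t<T. wt m i (p t)) / real T"

definition qw :: "nat \<Rightarrow> nat \<Rightarrow> (nat \<Rightarrow> real) \<Rightarrow> (nat \<Rightarrow> real) \<Rightarrow> nat \<Rightarrow> real" where
  "qw m T p y i = (if piw m T p i = 0 then 0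
                   else ((\<Sum>t<T. wt m i (p t) * y t) / real T) / piw m T p i)"

definition SCDL :: "nat \<Rightarrow> nat \<Rightarrow> (nat \<Rightarrow> real) \<Rightarrow> (nat \<Rightarrow> real) \<Rightarrow> real" where
  "SCDL m T p y = Max ((\<lambda>i.
      (\<Sum>j\<in>{0..i}. piw m T p j * max (qw m T p y j - real (i+1) / real m) 0)
    + (\<Sum>j\<in>{i+1..m}. piw m T p j * max (real i / real m - qw m T p y j) 0)) ` {0..m})"

end

theory Submission
  imports Defs
begin

lemma wt_nonneg: "0 \<le> wt m i p" by (simp add: wt_def)
lemma wt_le1: "wt m i p \<le> 1" by (simp add: wt_def)

lemma wt_grid: assumes "m > 0" shows "wt m j (real i / real m) = (if i = j then 1 else 0)"
proof -
  have "real m * (real i / real m) = real i" using assms by simp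
  then show ?thesis unfolding wt_def by (cases "i = j") (auto simp: abs_if)
qed

lemma hat_sum_top: "real n \<le> x \<Longrightarrow> (\<Sum>i\<le>n. max (1 - \<bar>x - real i\<bar>) 0) = max (1 - \<bar>x - real n\<bar>) 0"
proof (induction n)
  case 0 then show ?case by simp
next
  case (Suc n)
  then have "(\<Sum>i\<le>n. max (1 - \<bar>x - real i\<bar>) 0) = 0" by simp
  then show ?case by simp
qed

lemma hat_sum: "0 \<le> x \<Longrightarrow> x \<le> real n \<Longrightarrow> (\<Sum>i\<le>n. max (1 - \<bar>x - real i\<bar>) 0) = 1"
proof (induction n)
  case 0 then show ?case by simp
next
  case (Suc n)
  show ?case
  proof (cases "x \<le> real n")
    case True
    then show ?thesis using Suc by simp
  next
    case False
    then have "(\<Sum>i\<le>n. max (1 - \<bar>x - real i\<bar>) 0) = max (1 - \<bar>x - real n\<bar>) 0"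
      by (intro hat_sum_top) simp
    then show ?thesis using False Suc.prems by simp
  qed
qed

lemma wt_sum: assumes "p \<in> {0..1}" shows "(\<Sum>i\<le>m. wt m i p) = 1"
proof -
  have "(\<Sum>i\<le>m. wt m i p) = (\<Sum>i\<le>m. max (1 - \<bar>real m * p - real i\<bar>) 0)"
    by (simp add: wt_def)
  also have "\<dots> = 1" using assms by (intro hat_sum) (auto simp: mult_left_le)
  finally show ?thesis .
qed

definition tw :: "nat \<Rightarrow> real \<Rightarrow> nat \<Rightarrow> real" where
  "tw m p = (\<lambda>i. if i \<le> m then wt m i p else 0)"

lemma tw_prob: assumes "p \<in> {0..1}"
  shows "(\<integral>\<^sup>+x. ennreal (tw m p x) \<partial>count_space UNIV) = 1"
proof -
  have "(\<integral>\<^sup>+x. ennreal (tw m p x) \<partial>count_space UNIV) = (\<integral>\<^sup>+x. ennreal (tw m p x) * indicator {..m} x \<partial>count_space UNIV)"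
    by (intro nn_integral_cong) (auto simp: tw_def split: split_indicator)
  also have "\<dots> = (\<integral>\<^sup>+x. ennreal (tw m p x) \<partial>count_space {..m})"
    by (simp add: nn_integral_count_space_indicator)
  also have "\<dots> = (\<Sum>x\<le>m. ennreal (tw m p x))" by (simp add: nn_integral_count_space_finite)
  also have "\<dots> = ennreal (\<Sum>x\<le>m. tw m p x)" by (simp add: tw_def wt_nonneg)
  also have "(\<Sum>x\<le>m. tw m p x) = 1" using wt_sum[OF assms] by (simp add: tw_def)
  finally show ?thesis by simp
qed

lemma tau_eq: "tau m p = map_pmf (\<lambda>i. real i / real m) (embed_pmf (tw m p))"
  by (simp add: tau_def tw_def)

lemma pmf_tw: "p \<in> {0..1} \<Longrightarrow> pmf (embed_pmf (tw m p)) i = tw m p i"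
proof (rule pmf_embed_pmf)
  show "\<And>x. 0 \<le> tw m p x" by (simp add: tw_def wt_nonneg)
  assume "p \<in> {0..1}"
  then show "(\<integral>\<^sup>+x. ennreal (tw m p x) \<partial>count_space UNIV) = 1" by (rule tw_prob)
qed

lemma set_tau: assumes "p \<in> {0..1}" shows "set_pmf (tau m p) \<subseteq> (\<lambda>i. real i / real m) ` {..m}"
proof -
  have "set_pmf (embed_pmf (tw m p)) \<subseteq> {..m}"
    using pmf_tw[OF assms] by (auto simp: set_pmf_eq tw_def)
  then show ?thesis by (auto simp: tau_eq)
qed

lemma finite_tau: "p \<in> {0..1} \<Longrightarrow> finite (set_pmf (tau m p))"
  using set_tau by (meson finite_atMost finite_imageI finite_subset)

lemma exp_tau: assumes "p \<in> {0..1}"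
  shows "measure_pmf.expectation (tau m p) f = (\<Sum>i\<le>m. wt m i p * f (real i / real m))"
proof -
  have "measure_pmf.expectation (tau m p) f = measure_pmf.expectation (embed_pmf (tw m p)) (\<lambda>i. f (real i / real m))"
    by (simp add: tau_eq)
  also have "\<dots> = (\<Sum>i\<le>m. pmf (embed_pmf (tw m p)) i *\<^sub>R f (real i / real m))"
  proof (rule integral_measure_pmf)
    fix a assume "a \<in> set_pmf (embed_pmf (tw m p))"
    then have "pmf (embed_pmf (tw m p)) a \<noteq> 0" by (simp add: set_pmf_eq)
    then have "tw m p a \<noteq> 0" by (metis pmf_tw[OF assms])
    then show "a \<in> {..m}" by (auto simp: tw_def split: if_splits)
  qed simp
  also have "\<dots> = (\<Sum>i\<le>m. wt m i p * f (real i / real m))"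
    using pmf_tw[OF assms] by (simp add: tw_def)
  finally show ?thesis .
qed

lemma exp_tau_wt: assumes "p \<in> {0..1}" "m > 0" "j \<le> m"
  shows "measure_pmf.expectation (tau m p) (\<lambda>x. c * wt m j x) = c * wt m j p"
proof -
  have "(\<Sum>i\<le>m. wt m i p * (c * wt m j (real i / real m))) = (\<Sum>i\<le>m. if i = j then c * wt m j p else 0)"
    using assms by (intro sum.cong) (auto simp: wt_grid)
  also have "\<dots> = c * wt m j p" using assms by simp
  finally have "(\<Sum>i\<le>m. wt m i p * (c * wt m j (real i / real m))) = c * wt m j p" .
  then show ?thesis by (simp only: exp_tau[OF assms(1)])
qed

lemma exp_neg_bound: fixes x :: real assumes "0 \<le> x" shows "exp (- x) \<le> 1 - x + x\<^sup>2"
proof -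
  have "exp (-x) = 1 / exp x" by (simp add: exp_minus field_simps)
  also have "\<dots> \<le> 1 / (1 + x)" using assms by (intro divide_left_mono) auto
  also have "\<dots> \<le> 1 - x + x\<^sup>2"
  proof -
    have "1 \<le> (1 - x + x\<^sup>2) * (1 + x)" using assms by (simp add: algebra_simps power2_eq_square power3_eq_cube)
    then show ?thesis using assms by (simp add: field_simps)
  qed
  finally show ?thesis .
qed

lemma mgf_tail:
  fixes Q :: "nat \<Rightarrow> 'a pmf" and g :: "nat \<Rightarrow> 'a \<Rightarrow> real"
  assumes fin: "\<And>t. t < T \<Longrightarrow> finite (set_pmf (Q t))"
    and g01: "\<And>t x. t < T \<Longrightarrow> x \<in> set_pmf (Q t) \<Longrightarrow> g t x = 0 \<or> g t x = 1"
    and mu: "\<mu> = (\<Sum>t<T. measure_pmf.expectation (Q t) (g t))"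
  shows "measure_pmf.prob (Pi_pmf {..<T} d Q) {x. s * (\<Sum>t<T. g t (x t)) \<ge> c} \<le> exp ((exp s - 1) * \<mu> - c)"
proof -
  let ?M = "Pi_pmf {..<T} d Q"
  let ?u = "\<lambda>x. \<Prod>t<T. exp (s * g t (x t))"
  have int: "integrable (measure_pmf ?M) ?u"
    by (intro integrable_prod_Pi_pmf integrable_measure_pmf_finite fin) auto
  have Eu: "measure_pmf.expectation ?M ?u = (\<Prod>t<T. measure_pmf.expectation (Q t) (\<lambda>v. exp (s * g t v)))"
    by (intro expectation_prod_Pi_pmf integrable_measure_pmf_finite fin) auto
  have Et: "measure_pmf.expectation (Q t) (\<lambda>v. exp (s * g t v)) = 1 + (exp s - 1) * measure_pmf.expectation (Q t) (g t)"
    if t: "t < T" for t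
  proof -
    have "measure_pmf.expectation (Q t) (\<lambda>v. exp (s * g t v)) = measure_pmf.expectation (Q t) (\<lambda>v. 1 + (exp s - 1) * g t v)"
      by (intro integral_cong_AE AE_pmfI) (use g01[OF t] in force)+
    also have "\<dots> = measure_pmf.expectation (Q t) (\<lambda>v. 1) + measure_pmf.expectation (Q t) (\<lambda>v. (exp s - 1) * g t v)"
      by (rule Bochner_Integration.integral_add) (auto intro: integrable_measure_pmf_finite fin t)
    also have "\<dots> = 1 + (exp s - 1) * measure_pmf.expectation (Q t) (g t)"
      by simp
    finally show ?thesis .
  qed
  have "measure_pmf.expectation ?M ?u \<le> (\<Prod>t<T. exp ((exp s - 1) * measure_pmf.expectation (Q t) (g t)))"
    unfolding Eu
  proof (intro prod_mono conjI)
    fix t assume "t \<in> {..<T}"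
    then have t: "t < T" by simp
    have "0 \<le> measure_pmf.expectation (Q t) (\<lambda>v. exp (s * g t v))" by simp
    then show "0 \<le> measure_pmf.expectation (Q t) (\<lambda>v. exp (s * g t v))" .
    show "measure_pmf.expectation (Q t) (\<lambda>v. exp (s * g t v)) \<le> exp ((exp s - 1) * measure_pmf.expectation (Q t) (g t))"
      unfolding Et[OF t] by (rule exp_ge_add_one_self)
  qed
  also have "\<dots> = exp ((exp s - 1) * \<mu>)"
    by (simp add: mu exp_sum sum_distrib_left)
  finally have Eu_le: "measure_pmf.expectation ?M ?u \<le> exp ((exp s - 1) * \<mu>)" .
  have "{x. s * (\<Sum>t<T. g t (x t)) \<ge> c} = {x \<in> space (measure_pmf ?M). ?u x \<ge> exp c}"
    by (auto simp: exp_sum[symmetric] sum_distrib_left)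
  then have "measure_pmf.prob ?M {x. s * (\<Sum>t<T. g t (x t)) \<ge> c} \<le> measure_pmf.expectation ?M ?u / exp c"
    using integral_Markov_inequality_measure[OF int, of UNIV "exp c"] by (simp add: prod_nonneg)
  also have "\<dots> \<le> exp ((exp s - 1) * \<mu>) / exp c"
    by (intro divide_right_mono Eu_le) simp
  also have "\<dots> = exp ((exp s - 1) * \<mu> - c)" by (simp add: exp_diff)
  finally show ?thesis .
qed

lemma chernoff:
  fixes Q :: "nat \<Rightarrow> 'a pmf" and g :: "nat \<Rightarrow> 'a \<Rightarrow> real"
  assumes fin: "\<And>t. t < T \<Longrightarrow> finite (set_pmf (Q t))"
    and g01: "\<And>t x. t < T \<Longrightarrow> x \<in> set_pmf (Q t) \<Longrightarrow> g t x = 0 \<or> g t x = 1"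
    and mu: "\<mu> = (\<Sum>t<T. measure_pmf.expectation (Q t) (g t))"
    and L: "L > 0"
  shows "measure_pmf.prob (Pi_pmf {..<T} d Q)
           {x. \<bar>(\<Sum>t<T. g t (x t)) - \<mu>\<bar> \<ge> 2 * sqrt (\<mu> * L) + 2 * L} \<le> 2 * exp (- L)"
proof -
  let ?M = "Pi_pmf {..<T} d Q"
  let ?a = "2 * sqrt (\<mu> * L) + 2 * L"
  have mu0: "\<mu> \<ge> 0"
    unfolding mu by (intro sum_nonneg integral_nonneg_AE AE_pmfI) (use g01 in force)
  obtain l where l: "0 < l" "l \<le> 1" "l\<^sup>2 * \<mu> - l * ?a \<le> - L"
  proof (cases "\<mu> \<le> L")
    case True
    have "1\<^sup>2 * \<mu> - 1 * ?a \<le> - L" 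
    proof -
      have "0 \<le> sqrt (\<mu> * L)" using mu0 L by simp
      moreover have "1\<^sup>2 * \<mu> - 1 * ?a = \<mu> - 2 * sqrt (\<mu> * L) - 2 * L" by simp
      ultimately show ?thesis using True L by linarith
    qed
    then show ?thesis using that[of 1] by simp
  next
    case False
    define l where "l = sqrt (L / \<mu>)"
    have l2: "l\<^sup>2 * \<mu> = L" using False L mu0 by (simp add: l_def)
    have "l * sqrt (\<mu> * L) = L" using False L mu0
      by (simp add: l_def real_sqrt_mult[symmetric])
    then have la: "l * ?a = 2 * L + 2 * (l * L)" by (simp add: algebra_simps)
    have "0 \<le> l" using L mu0 by (simp add: l_def)
    then have "0 \<le> l * L" using L by simp
    then have "l\<^sup>2 * \<mu> - l * ?a \<le> - L" using l2 la by linarith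
    moreover have "0 < l" "l \<le> 1" using False L by (auto simp: l_def)
    ultimately show ?thesis using that by blast
  qed
  have up: "measure_pmf.prob ?M {x. (\<Sum>t<T. g t (x t)) \<ge> \<mu> + ?a} \<le> exp (- L)"
  proof -
    have "{x. (\<Sum>t<T. g t (x t)) \<ge> \<mu> + ?a} \<subseteq> {x. l * (\<Sum>t<T. g t (x t)) \<ge> l * (\<mu> + ?a)}"
      using l by (auto intro: mult_left_mono)
    then have "measure_pmf.prob ?M {x. (\<Sum>t<T. g t (x t)) \<ge> \<mu> + ?a} \<le> measure_pmf.prob ?M {x. l * (\<Sum>t<T. g t (x t)) \<ge> l * (\<mu> + ?a)}"
      by (intro measure_pmf.finite_measure_mono) auto
    also have "\<dots> \<le> exp ((exp l - 1) * \<mu> - l * (\<mu> + ?a))"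
      by (rule mgf_tail[OF fin g01 mu])
    also have "\<dots> \<le> exp (- L)"
    proof -
      have "exp l - 1 \<le> l + l\<^sup>2" using exp_bound[of l] l by simp
      then have "(exp l - 1) * \<mu> \<le> (l + l\<^sup>2) * \<mu>" using mu0 by (intro mult_right_mono)
      then show ?thesis using l by (simp add: algebra_simps)
    qed
    finally show ?thesis .
  qed
  have lo: "measure_pmf.prob ?M {x. (\<Sum>t<T. g t (x t)) \<le> \<mu> - ?a} \<le> exp (- L)"
  proof -
    have "{x. (\<Sum>t<T. g t (x t)) \<le> \<mu> - ?a} \<subseteq> {x. (-l) * (\<Sum>t<T. g t (x t)) \<ge> (-l) * (\<mu> - ?a)}"
      using l by (auto intro: mult_left_mono)
    then have "measure_pmf.prob ?M {x. (\<Sum>t<T. g t (x t)) \<le> \<mu> - ?a} \<le> measure_pmf.prob ?M {x. (-l) * (\<Sum>t<T. g t (x t)) \<ge> (-l) * (\<mu> - ?a)}"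
      by (intro measure_pmf.finite_measure_mono) auto
    also have "\<dots> \<le> exp ((exp (-l) - 1) * \<mu> - (-l) * (\<mu> - ?a))"
      by (rule mgf_tail[OF fin g01 mu])
    also have "\<dots> \<le> exp (- L)"
    proof -
      have "exp (-l) - 1 \<le> - l + l\<^sup>2" using exp_neg_bound[of l] l by simp
      then have "(exp (-l) - 1) * \<mu> \<le> (- l + l\<^sup>2) * \<mu>" using mu0 by (intro mult_right_mono)
      then show ?thesis using l by (simp add: algebra_simps)
    qed
    finally show ?thesis .
  qed
  have "{x. \<bar>(\<Sum>t<T. g t (x t)) - \<mu>\<bar> \<ge> ?a} = {x. (\<Sum>t<T. g t (x t)) \<ge> \<mu> + ?a} \<union> {x. (\<Sum>t<T. g t (x t)) \<le> \<mu> - ?a}"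
    by auto
  then have "measure_pmf.prob ?M {x. \<bar>(\<Sum>t<T. g t (x t)) - \<mu>\<bar> \<ge> ?a} \<le>
     measure_pmf.prob ?M {x. (\<Sum>t<T. g t (x t)) \<ge> \<mu> + ?a} + measure_pmf.prob ?M {x. (\<Sum>t<T. g t (x t)) \<le> \<mu> - ?a}"
    by (simp add: measure_Un_le)
  then show ?thesis using up lo by simp
qed

definition Lsum :: "nat \<Rightarrow> nat \<Rightarrow> (nat \<Rightarrow> real) \<Rightarrow> (nat \<Rightarrow> real) \<Rightarrow> real" where
  "Lsum m i A B = (\<Sum>j\<in>{0..i}. max (A j - real (i+1) / real m * B j) 0)"

definition Hm :: "nat \<Rightarrow> real" where "Hm m = (\<Sum>k=1..m. 1 / real k)"

lemma Lsum_nonneg: "0 \<le> Lsum m i A B"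
  unfolding Lsum_def by (intro sum_nonneg) auto

lemma Hm_nonneg: "0 \<le> Hm m" unfolding Hm_def by (intro sum_nonneg) auto

lemma Hm_ge1: "1 \<le> m \<Longrightarrow> 1 \<le> Hm m"
proof -
  assume "1 \<le> m"
  then have "(\<Sum>k\<in>{1}. 1 / real k) \<le> (\<Sum>k=1..m. 1 / real k)"
    by (intro sum_mono2) auto
  then show ?thesis by (simp add: Hm_def)
qed

lemma Hm_mono: "i \<le> m \<Longrightarrow> Hm i \<le> Hm m"
  unfolding Hm_def by (intro sum_mono2) auto

lemma sum_inv_dist: "(\<Sum>j<i. 1 / real (i - j)) = Hm i"
  unfolding Hm_def
  by (rule sum.reindex_bij_witness[of _ "\<lambda>k. i - k" "\<lambda>j. i - j"]) auto

lemma inner_half: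
  assumes "1 \<le> k" "k \<le> i"
  shows "1/2 \<le> (\<Sum>r\<in>{1..i}. if real k \<le> 2 * real r \<and> r \<le> k then 1 / real r else 0)"
proof -
  let ?P = "\<lambda>r. real k \<le> 2 * real r \<and> r \<le> k"
  have set: "{r \<in> {1..i}. ?P r} = {(k+1) div 2..k}"
  proof
    show "{r \<in> {1..i}. ?P r} \<subseteq> {(k+1) div 2..k}"
    proof
      fix r assume "r \<in> {r \<in> {1..i}. ?P r}"
      then have "k \<le> 2 * r" "r \<le> k" by (auto simp flip: of_nat_mult)
      then show "r \<in> {(k+1) div 2..k}" by auto
    qed
    show "{(k+1) div 2..k} \<subseteq> {r \<in> {1..i}. ?P r}"
    proof
      fix r assume "r \<in> {(k+1) div 2..k}"
      then have "k \<le> 2 * r" "r \<le> k" by auto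
      then show "r \<in> {r \<in> {1..i}. ?P r}" using assms by (auto simp flip: of_nat_mult)
    qed
  qed
  have "(\<Sum>r\<in>{1..i}. if ?P r then 1 / real r else 0) = (\<Sum>r\<in>{r \<in> {1..i}. ?P r}. 1 / real r)"
    by (rule sum.inter_filter[symmetric]) simp
  also have "\<dots> = (\<Sum>r\<in>{(k+1) div 2..k}. 1 / real r)" by (simp only: set)
  also have "\<dots> \<ge> (\<Sum>r\<in>{(k+1) div 2..k}. 1 / real k)"
    using assms by (intro sum_mono) (auto intro!: divide_left_mono)
  finally have "(\<Sum>r\<in>{(k+1) div 2..k}. 1 / real k) \<le> (\<Sum>r\<in>{1..i}. if ?P r then 1 / real r else 0)" .
  moreover have "(\<Sum>r\<in>{(k+1) div 2..k}. 1 / real k) = real (k + 1 - (k+1) div 2) / real k"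
    by simp
  moreover have "1/2 \<le> real (k + 1 - (k+1) div 2) / real k"
  proof -
    have "k \<le> 2 * (k + 1 - (k+1) div 2)" by linarith
    then have "real k \<le> 2 * real (k + 1 - (k+1) div 2)" by linarith
    then show ?thesis using assms by (simp add: field_simps)
  qed
  ultimately show ?thesis by linarith
qed

lemma near_weighted:
  assumes m: "1 \<le> m" "i \<le> m"
    and Bnn: "\<And>j. j \<le> i \<Longrightarrow> 0 \<le> B j"
    and Sh: "\<And>r. r \<le> i \<Longrightarrow> Lsum m r A B \<le> S"
    and N: "N = {j. j < i \<and> - (real (i - j) * B j / (4 * real m)) \<le> A j - real (i+1) / real m * B j}"
  shows "(\<Sum>j\<in>N. B j * real (i - j)) \<le> 8 * real m * Hm m * S"
proof -
  have S0: "0 \<le> S" using Sh[of 0] Lsum_nonneg[of m 0 A B] by simp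
  have NI: "N \<subseteq> {..<i}" using N by auto
  have finN: "finite N" using NI finite_subset by blast
  define f where "f r j = (if real (i-j) \<le> 2 * real r \<and> r \<le> i - j then B j * real (i-j) / (4 * real m) else 0)" for r j
  have key: "(\<Sum>j\<in>N. f r j) \<le> S" if r: "r \<in> {1..i}" for r
  proof -
    let ?g = "\<lambda>j. if j \<le> i - r then max (A j - real (i - r + 1) / real m * B j) 0 else 0"
    have pt: "f r j \<le> ?g j" if jN': "j \<in> N" for j
    proof (cases "real (i-j) \<le> 2 * real r \<and> r \<le> i - j")
      case True
      have jN: "j < i" and xj: "- (real (i - j) * B j / (4 * real m)) \<le> A j - real (i+1) / real m * B j"
        using jN' N by auto
      have jle: "j \<le> i - r" using True jN by auto
      have eq: "A j - real (i - r + 1) / real m * B j = (A j - real (i+1) / real m * B j) + real r * B j / real m"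
        using r by (simp add: of_nat_diff diff_divide_distrib add_divide_distrib left_diff_distrib algebra_simps)
      have "real (i-j) * B j \<le> (2 * real r) * B j" using True Bnn[of j] jN by (intro mult_right_mono) auto
      then have h: "real (i-j) * B j / (4*real m) + real (i-j) * B j/(4*real m) \<le> real r * B j / real m"
        using m by (simp add: field_simps)
      have "f r j = real (i-j) * B j / (4 * real m)" using True by (simp add: f_def mult.commute)
      also have "\<dots> \<le> A j - real (i - r + 1) / real m * B j" using eq h xj by linarith
      also have "\<dots> \<le> ?g j" using jle by simp
      finally show ?thesis .
    next
      case False
      then have "f r j = 0" unfolding f_def by (simp only: if_False)
      moreover have "0 \<le> ?g j" by simp
      ultimately show ?thesis by linarith
    qed
    have "(\<Sum>j\<in>N. f r j) \<le> (\<Sum>j\<in>N. ?g j)" using pt by (intro sum_mono) auto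
    also have "\<dots> \<le> (\<Sum>j\<in>{..<i}. ?g j)" using NI by (intro sum_mono2) auto
    also have "\<dots> = (\<Sum>j\<in>{j \<in> {..<i}. j \<le> i - r}. max (A j - real (i - r + 1) / real m * B j) 0)"
      by (rule sum.inter_filter[symmetric]) simp
    also have "{j \<in> {..<i}. j \<le> i - r} = {0..i - r}" using r by auto
    also have "(\<Sum>j\<in>{0..i - r}. max (A j - real (i - r + 1) / real m * B j) 0) = Lsum m (i - r) A B"
      by (simp add: Lsum_def)
    also have "\<dots> \<le> S" by (rule Sh) simp
    finally show ?thesis .
  qed
  have "(\<Sum>r\<in>{1..i}. 1 / real r * (\<Sum>j\<in>N. f r j)) \<le> (\<Sum>r\<in>{1..i}. 1 / real r * S)"
    using key by (intro sum_mono mult_left_mono) auto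
  also have "\<dots> = Hm i * S" by (simp add: Hm_def sum_distrib_right)
  also have "\<dots> \<le> Hm m * S" using Hm_mono[OF m(2)] S0 by (intro mult_right_mono)
  finally have A1: "(\<Sum>r\<in>{1..i}. 1 / real r * (\<Sum>j\<in>N. f r j)) \<le> Hm m * S" .
  have "(\<Sum>r\<in>{1..i}. 1 / real r * (\<Sum>j\<in>N. f r j)) = (\<Sum>j\<in>N. \<Sum>r\<in>{1..i}. 1 / real r * f r j)"
    by (simp add: sum_distrib_left) (rule sum.swap)
  also have "\<dots> = (\<Sum>j\<in>N. B j * real (i-j) / (4 * real m) *
      (\<Sum>r\<in>{1..i}. if real (i-j) \<le> 2 * real r \<and> r \<le> i - j then 1 / real r else 0))"
    by (simp add: sum_distrib_left f_def if_distrib mult.commute cong: if_cong)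
  finally have A2: "(\<Sum>j\<in>N. B j * real (i-j) / (4 * real m) *
      (\<Sum>r\<in>{1..i}. if real (i-j) \<le> 2 * real r \<and> r \<le> i - j then 1 / real r else 0)) \<le> Hm m * S"
    using A1 by simp
  have "(\<Sum>j\<in>N. B j * real (i-j) / (4 * real m) * (1/2)) \<le> (\<Sum>j\<in>N. B j * real (i-j) / (4 * real m) *
      (\<Sum>r\<in>{1..i}. if real (i-j) \<le> 2 * real r \<and> r \<le> i - j then 1 / real r else 0))"
  proof (intro sum_mono mult_left_mono)
    fix j assume "j \<in> N"
    then have j: "j < i" using N by auto
    show "1/2 \<le> (\<Sum>r\<in>{1..i}. if real (i-j) \<le> 2 * real r \<and> r \<le> i - j then 1 / real r else 0)"
      by (rule inner_half) (use j in auto)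
    show "0 \<le> B j * real (i-j) / (4 * real m)" using Bnn[of j] j by simp
  qed
  then have "(\<Sum>j\<in>N. B j * real (i-j) / (4 * real m) * (1/2)) \<le> Hm m * S" using A2 by linarith
  moreover have "(\<Sum>j\<in>N. B j * real (i-j) / (4 * real m) * (1/2)) = (\<Sum>j\<in>N. B j * real (i-j)) / (8 * real m)"
    by (simp add: sum_divide_distrib)
  ultimately have "(\<Sum>j\<in>N. B j * real (i-j)) / (8 * real m) \<le> Hm m * S" by simp
  then show ?thesis using m by (simp add: field_simps)
qed

lemma far_bound:
  fixes a u v :: real
  assumes "0 < a" "a \<le> 1" "0 \<le> u" "0 \<le> v" "a * u\<^sup>2 < 8 * u * v + 8 * v\<^sup>2"
  shows "4 * (2 * u * v + 2 * v\<^sup>2) \<le> 80 * v\<^sup>2 / a"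
proof -
  have u: "u \<le> 9 * v / a"
  proof (rule ccontr)
    assume "\<not> u \<le> 9 * v / a"
    then have "9 * v / a < u" by simp
    then have h: "9 * v < u * a" using assms(1) by (simp add: pos_divide_less_eq)
    have up: "0 < u"
    proof (rule ccontr)
      assume "\<not> 0 < u" then have "u = 0" using assms(3) by simp
      then show False using h assms(4) by simp
    qed
    have h1: "9 * v * u < u * a * u" using h up by (rule mult_strict_right_mono)
    have h2: "9 * v * v \<le> u * a * v" using h assms(4) by (intro mult_right_mono) auto
    have h3: "a * (u * v) \<le> 1 * (u * v)" using assms by (intro mult_right_mono) auto
    have e1: "9 * (u * v) < a * u\<^sup>2" using h1 by (simp add: power2_eq_square algebra_simps)
    have e2: "9 * v\<^sup>2 \<le> a * (u * v)" using h2 by (simp add: power2_eq_square algebra_simps)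
    have e3: "0 \<le> v\<^sup>2" by simp
    have e4: "8 * u * v = 8 * (u * v)" by simp
    have "8 * u * v + 8 * v\<^sup>2 < a * u\<^sup>2" using e1 e2 e3 h3 e4 by linarith
    then show False using assms by linarith
  qed
  have "u * v \<le> 9 * v / a * v" using u assms by (intro mult_right_mono) auto
  then have "4 * (2 * u * v + 2 * v\<^sup>2) \<le> 72 * v\<^sup>2 / a + 8 * v\<^sup>2" by (simp add: power2_eq_square)
  also have "8 * v\<^sup>2 \<le> 8 * v\<^sup>2 / a" using assms by (simp add: field_simps mult_left_le_one_le)
  finally show ?thesis by simp
qed

lemma max_diff_le: "\<bar>max (a::real) 0 - max b 0\<bar> \<le> \<bar>a - b\<bar>" by linarith

lemma core_left:
  assumes m: "1 \<le> m" "i \<le> m" and v: "0 \<le> v"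
    and Bnn: "\<And>j. j \<le> i \<Longrightarrow> 0 \<le> B j \<and> B j \<le> 1"
    and dA: "\<And>j. j \<le> i \<Longrightarrow> \<bar>A' j - A j\<bar> \<le> 2 * (2 * sqrt (B j) * v + 2 * v\<^sup>2)"
    and dB: "\<And>j. j \<le> i \<Longrightarrow> \<bar>B' j - B j\<bar> \<le> 2 * sqrt (B j) * v + 2 * v\<^sup>2"
    and Sh: "\<And>r. r \<le> i \<Longrightarrow> Lsum m r A B \<le> S"
  shows "\<bar>Lsum m i A' B' - Lsum m i A B\<bar> \<le> 336 * (v + Hm m * v * sqrt (real m * S) + real m * Hm m * v\<^sup>2)"
proof -
  define c where "c = real (i+1) / real m"
  define e where "e j = 2 * sqrt (B j) * v + 2 * v\<^sup>2" for j
  define x where "x j = A j - c * B j" for j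
  define x' where "x' j = A' j - c * B' j" for j
  define D where "D j = \<bar>max (x' j) 0 - max (x j) 0\<bar>" for j
  define N where "N = {j. j < i \<and> - (real (i - j) * B j / (4 * real m)) \<le> A j - real (i+1) / real m * B j}"
  have mpos: "0 < real m" using m by simp
  have c0: "0 \<le> c" by (simp add: c_def)
  have c2: "c \<le> 2" using m by (simp add: c_def field_simps)
  have S0: "0 \<le> S" using Sh[of 0] Lsum_nonneg[of m 0 A B] by simp
  have e0: "0 \<le> e j" if "j \<le> i" for j using Bnn[OF that] v by (simp add: e_def)
  have dx: "\<bar>x' j - x j\<bar> \<le> 4 * e j" if j: "j \<le> i" for j
  proof -
    have "x' j - x j = (A' j - A j) - c * (B' j - B j)" by (simp add: x_def x'_def algebra_simps)
    moreover have "\<bar>c * (B' j - B j)\<bar> \<le> 2 * e j"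
    proof -
      have "\<bar>c * (B' j - B j)\<bar> = c * \<bar>B' j - B j\<bar>" using c0 by (simp add: abs_mult)
      also have "\<dots> \<le> 2 * e j" using dB[OF j] c0 c2 e0[OF j] unfolding e_def[symmetric]
        by (intro mult_mono) auto
      finally show ?thesis .
    qed
    moreover have "\<bar>A' j - A j\<bar> \<le> 2 * e j" using dA[OF j] by (simp add: e_def)
    ultimately show ?thesis by linarith
  qed
  have Dle: "D j \<le> 4 * e j" if "j \<le> i" for j
    using max_diff_le[of "x' j" "x j"] dx[OF that] by (simp add: D_def)
  have D0: "D j = 0" if "j \<le> i" "x j \<le> - 4 * e j" for j
    using dx[OF that(1)] that(2) by (simp add: D_def)
  have perbin: "D j \<le> 320 * real m * v\<^sup>2 / real (i - j) + 8 * v\<^sup>2 + (if j \<in> N then 8 * v * sqrt (B j) else 0)"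
    if j: "j < i" for j
  proof -
    have ji: "j \<le> i" using j by simp
    have t0: "0 \<le> 320 * real m * v\<^sup>2 / real (i - j)" by simp
    show ?thesis
    proof (cases "j \<in> N")
      case True
      have d: "D j \<le> 8 * v * sqrt (B j) + 8 * v\<^sup>2" using Dle[OF ji] by (simp add: e_def algebra_simps)
      have eq: "(if j \<in> N then 8 * v * sqrt (B j) else 0) = 8 * v * sqrt (B j)" using True by simp
      have gen: "\<And>a b c d::real. d \<le> b + c \<Longrightarrow> 0 \<le> a \<Longrightarrow> d \<le> a + c + b" by linarith
      show ?thesis unfolding eq by (rule gen[OF d t0])
    next
      case False
      then have far: "A j - c * B j < - (real (i - j) * B j / (4 * real m))"
        using j by (auto simp: N_def c_def)
      show ?thesis
      proof (cases "x j \<le> - 4 * e j")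
        case True
        then show ?thesis using D0[OF ji] t0 False by simp
      next
        case False2: False
        define a where "a = real (i - j) / (4 * real m)"
        define u where "u = sqrt (B j)"
        have a0: "0 < a" using j mpos by (simp add: a_def)
        have a1: "a \<le> 1" using j m by (simp add: a_def field_simps)
        have u0: "0 \<le> u" using Bnn[OF ji] by (simp add: u_def)
        have Bu: "B j = u\<^sup>2" using Bnn[OF ji] by (simp add: u_def)
        have "a * u\<^sup>2 < 4 * e j" using far False2 Bu by (simp add: x_def a_def)
        then have "a * u\<^sup>2 < 8 * u * v + 8 * v\<^sup>2" by (simp add: e_def u_def)
        from far_bound[OF a0 a1 u0 v this]
        have "4 * e j \<le> 80 * v\<^sup>2 / a" by (simp add: e_def u_def)
        also have "80 * v\<^sup>2 / a = 320 * real m * v\<^sup>2 / real (i - j)" using j mpos by (simp add: a_def field_simps)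
        finally have d2: "D j \<le> 320 * real m * v\<^sup>2 / real (i - j)" by (rule order_trans[OF Dle[OF ji]])
        have eq: "(if j \<in> N then 8 * v * sqrt (B j) else 0) = 0" using False by simp
        have gen: "\<And>a b d::real. d \<le> a \<Longrightarrow> 0 \<le> b \<Longrightarrow> d \<le> a + b + 0" by linarith
        show ?thesis unfolding eq by (rule gen[OF d2]) simp
      qed
    qed
  qed
  have "Lsum m i A' B' - Lsum m i A B = (\<Sum>j\<in>{0..i}. max (x' j) 0 - max (x j) 0)"
    by (simp add: Lsum_def x_def x'_def c_def sum_subtractf)
  then have "\<bar>Lsum m i A' B' - Lsum m i A B\<bar> \<le> (\<Sum>j\<in>{0..i}. D j)"
    by (simp add: D_def sum_abs)
  also have "(\<Sum>j\<in>{0..i}. D j) = D i + (\<Sum>j<i. D j)"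
  proof -
    have "{0..i} = insert i {..<i}" by auto
    then show ?thesis by simp
  qed
  also have "D i \<le> 8 * v + 8 * v\<^sup>2"
  proof -
    have "sqrt (B i) \<le> 1" using Bnn[of i] by simp
    then have "sqrt (B i) * v \<le> 1 * v" using v by (intro mult_right_mono)
    then show ?thesis using Dle[of i] by (simp add: e_def)
  qed
  also have "(\<Sum>j<i. D j) \<le> (\<Sum>j<i. 320 * real m * v\<^sup>2 / real (i - j) + 8 * v\<^sup>2 + (if j \<in> N then 8 * v * sqrt (B j) else 0))"
    using perbin by (intro sum_mono) auto
  also have "\<dots> = 320 * real m * v\<^sup>2 * Hm i + 8 * real i * v\<^sup>2 + 8 * v * (\<Sum>j\<in>N. sqrt (B j))"
  proof -
    have "(\<Sum>j<i. 320 * real m * v\<^sup>2 / real (i - j)) = 320 * real m * v\<^sup>2 * Hm i"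
      by (simp add: sum_inv_dist[symmetric] sum_distrib_left)
    moreover have "(\<Sum>j<i. if j \<in> N then 8 * v * sqrt (B j) else 0) = (\<Sum>j\<in>{j\<in>{..<i}. j \<in> N}. 8 * v * sqrt (B j))"
      by (rule sum.inter_filter[symmetric]) simp
    moreover have "{j\<in>{..<i}. j \<in> N} = N" by (auto simp: N_def)
    ultimately show ?thesis by (simp add: sum.distrib sum_distrib_left)
  qed
  finally have tot: "\<bar>Lsum m i A' B' - Lsum m i A B\<bar> \<le> 8 * v + 8 * v\<^sup>2 + (320 * real m * v\<^sup>2 * Hm i + 8 * real i * v\<^sup>2 + 8 * v * (\<Sum>j\<in>N. sqrt (B j)))"
    by simp
  have NI: "N \<subseteq> {..<i}" by (auto simp: N_def)
  have finN: "finite N" using NI finite_subset by blast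
  have W: "(\<Sum>j\<in>N. B j * real (i - j)) \<le> 8 * real m * Hm m * S"
    by (rule near_weighted[OF m _ Sh N_def]) (use Bnn in auto)
  have Hinv: "(\<Sum>j\<in>N. 1 / real (i - j)) \<le> Hm m"
  proof -
    have "(\<Sum>j\<in>N. 1 / real (i - j)) \<le> (\<Sum>j<i. 1 / real (i - j))" using NI by (intro sum_mono2) auto
    also have "\<dots> = Hm i" by (rule sum_inv_dist)
    also have "\<dots> \<le> Hm m" by (rule Hm_mono[OF m(2)])
    finally show ?thesis .
  qed
  have sqN: "(\<Sum>j\<in>N. sqrt (B j)) \<le> 3 * Hm m * sqrt (real m * S)"
  proof -
    have "(\<Sum>j\<in>N. sqrt (B j)) = (\<Sum>j\<in>N. sqrt (B j * real (i - j)) * sqrt (1 / real (i - j)))"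
    proof (intro sum.cong refl)
      fix j assume "j \<in> N" then have "j < i" by (simp add: N_def)
      then show "sqrt (B j) = sqrt (B j * real (i - j)) * sqrt (1 / real (i - j))"
        by (simp add: real_sqrt_mult[symmetric])
    qed
    then have "(\<Sum>j\<in>N. sqrt (B j))\<^sup>2 \<le> (\<Sum>j\<in>N. (sqrt (B j * real (i - j)))\<^sup>2) * (\<Sum>j\<in>N. (sqrt (1 / real (i - j)))\<^sup>2)"
      by (simp only: Cauchy_Schwarz_ineq_sum)
    also have "\<dots> = (\<Sum>j\<in>N. B j * real (i - j)) * (\<Sum>j\<in>N. 1 / real (i - j))"
    proof -
      have "(\<Sum>j\<in>N. (sqrt (B j * real (i - j)))\<^sup>2) = (\<Sum>j\<in>N. B j * real (i - j))"
        by (intro sum.cong refl) (use Bnn NI in \<open>auto simp: N_def\<close>)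
      moreover have "(\<Sum>j\<in>N. (sqrt (1 / real (i - j)))\<^sup>2) = (\<Sum>j\<in>N. 1 / real (i - j))"
        by (intro sum.cong refl) auto
      ultimately show ?thesis by simp
    qed
    also have "\<dots> \<le> (8 * real m * Hm m * S) * Hm m"
      using W Hinv S0 Hm_nonneg[of m] by (intro mult_mono) (auto intro!: sum_nonneg mult_nonneg_nonneg simp: N_def dest: Bnn)
    also have "\<dots> \<le> (3 * Hm m * sqrt (real m * S))\<^sup>2"
    proof -
      have "(3 * Hm m * sqrt (real m * S))\<^sup>2 = 9 * (Hm m)\<^sup>2 * (real m * S)"
        using S0 by (simp add: power_mult_distrib)
      then show ?thesis using S0 Hm_nonneg[of m] by (simp add: power2_eq_square algebra_simps)
    qed
    finally have "(\<Sum>j\<in>N. sqrt (B j))\<^sup>2 \<le> (3 * Hm m * sqrt (real m * S))\<^sup>2" .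
    moreover have "0 \<le> 3 * Hm m * sqrt (real m * S)" using Hm_nonneg[of m] S0 by simp
    ultimately show ?thesis by (rule power2_le_imp_le)
  qed
  have H1: "1 \<le> Hm m" using Hm_ge1 m by simp
  have Hi: "Hm i \<le> Hm m" using Hm_mono m by simp
  have v2: "0 \<le> v\<^sup>2" by simp
  have mH: "1 \<le> real m * Hm m" using H1 m mult_mono[of 1 "real m" 1 "Hm m"] by simp
  have r1: "8 * v\<^sup>2 \<le> 8 * (real m * Hm m * v\<^sup>2)"
    using mult_right_mono[OF mH v2] by simp
  have r2: "320 * real m * v\<^sup>2 * Hm i \<le> 320 * (real m * Hm m * v\<^sup>2)"
  proof -
    have "real m * v\<^sup>2 * Hm i \<le> real m * v\<^sup>2 * Hm m" using Hi v2 by (intro mult_left_mono) auto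
    then show ?thesis by (simp add: algebra_simps)
  qed
  have r3: "8 * real i * v\<^sup>2 \<le> 8 * (real m * Hm m * v\<^sup>2)"
  proof -
    have "real m * 1 \<le> real m * Hm m" using H1 by (intro mult_left_mono) auto
    then have "real i \<le> real m * Hm m" using m by linarith
    then have "real i * v\<^sup>2 \<le> real m * Hm m * v\<^sup>2" using v2 by (intro mult_right_mono)
    then show ?thesis by simp
  qed
  have r4: "8 * v * (\<Sum>j\<in>N. sqrt (B j)) \<le> 24 * (Hm m * v * sqrt (real m * S))"
  proof -
    have "v * (\<Sum>j\<in>N. sqrt (B j)) \<le> v * (3 * Hm m * sqrt (real m * S))"
      using sqN v by (intro mult_left_mono)
    then show ?thesis by (simp add: algebra_simps)
  qed
  have r5: "0 \<le> Hm m * v * sqrt (real m * S)" using Hm_nonneg[of m] v S0 by simp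
  show ?thesis unfolding distrib_left using tot r1 r2 r3 r4 r5 v by linarith
qed

definition Rsum :: "nat \<Rightarrow> nat \<Rightarrow> (nat \<Rightarrow> real) \<Rightarrow> (nat \<Rightarrow> real) \<Rightarrow> real" where
  "Rsum m i A B = (\<Sum>j\<in>{i+1..m}. max (real i / real m * B j - A j) 0)"

definition Fsum :: "nat \<Rightarrow> nat \<Rightarrow> (nat \<Rightarrow> real) \<Rightarrow> (nat \<Rightarrow> real) \<Rightarrow> real" where
  "Fsum m i A B = Lsum m i A B + Rsum m i A B"

lemma Rsum_nonneg: "0 \<le> Rsum m i A B"
  unfolding Rsum_def by (intro sum_nonneg) auto

lemma Rsum_m: "Rsum m m A B = 0" by (simp add: Rsum_def)

lemma Rsum_refl:
  assumes "i < m"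
  shows "Rsum m i A B = Lsum m (m - 1 - i) (\<lambda>j. B (m-j) - A (m-j)) (\<lambda>j. B (m-j))"
proof -
  have "Lsum m (m - 1 - i) (\<lambda>j. B (m-j) - A (m-j)) (\<lambda>j. B (m-j))
      = (\<Sum>j\<in>{0..m - 1 - i}. max (real i / real m * B (m-j) - A (m-j)) 0)"
  proof (unfold Lsum_def, intro sum.cong refl)
    fix j
    have h: "real (m - 1 - i + 1) = real m - real i" using assms by (simp add: of_nat_diff)
    have h2: "(real m - real i) / real m * B (m-j) = B (m-j) - real i / real m * B (m-j)"
      using assms by (simp add: diff_divide_distrib left_diff_distrib)
    show "max (B (m-j) - A (m-j) - real (m - 1 - i + 1) / real m * B (m-j)) 0 = max (real i / real m * B (m-j) - A (m-j)) 0"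
      unfolding h h2 by (rule arg_cong[where f="\<lambda>x. max x 0"]) linarith
  qed
  also have "\<dots> = Rsum m i A B"
    unfolding Rsum_def
    by (rule sum.reindex_bij_witness[of _ "\<lambda>j. m - j" "\<lambda>j. m - j"]) (use assms in auto)
  finally show ?thesis by simp
qed

lemma core_both:
  assumes m: "1 \<le> m" "i \<le> m" and v: "0 \<le> v"
    and Bnn: "\<And>j. j \<le> m \<Longrightarrow> 0 \<le> B j \<and> B j \<le> 1"
    and dA: "\<And>j. j \<le> m \<Longrightarrow> \<bar>A' j - A j\<bar> \<le> 2 * sqrt (B j) * v + 2 * v\<^sup>2"
    and dB: "\<And>j. j \<le> m \<Longrightarrow> \<bar>B' j - B j\<bar> \<le> 2 * sqrt (B j) * v + 2 * v\<^sup>2"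
    and Sh: "\<And>r. r \<le> m \<Longrightarrow> Fsum m r A B \<le> S"
  shows "\<bar>Fsum m i A' B' - Fsum m i A B\<bar> \<le> 672 * (v + Hm m * v * sqrt (real m * S) + real m * Hm m * v\<^sup>2)"
proof -
  let ?K = "336 * (v + Hm m * v * sqrt (real m * S) + real m * Hm m * v\<^sup>2)"
  have e0: "0 \<le> 2 * sqrt (B j) * v + 2 * v\<^sup>2" if "j \<le> m" for j using Bnn[OF that] v by simp
  have L: "\<bar>Lsum m i A' B' - Lsum m i A B\<bar> \<le> ?K"
  proof (rule core_left[OF m v])
    show "\<And>j. j \<le> i \<Longrightarrow> 0 \<le> B j \<and> B j \<le> 1" using Bnn m by simp
    show "\<bar>A' j - A j\<bar> \<le> 2 * (2 * sqrt (B j) * v + 2 * v\<^sup>2)" if "j \<le> i" for j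
    proof -
      have jm: "j \<le> m" using that m by simp
      have gen: "\<And>a e::real. a \<le> e \<Longrightarrow> 0 \<le> e \<Longrightarrow> a \<le> 2 * e" by linarith
      from gen[OF dA[OF jm] e0[OF jm]] show ?thesis .
    qed
    show "\<And>j. j \<le> i \<Longrightarrow> \<bar>B' j - B j\<bar> \<le> 2 * sqrt (B j) * v + 2 * v\<^sup>2" using dB m by simp
    show "\<And>r. r \<le> i \<Longrightarrow> Lsum m r A B \<le> S"
      using Sh m Rsum_nonneg unfolding Fsum_def by (smt (verit) le_trans)
  qed
  have R: "\<bar>Rsum m i A' B' - Rsum m i A B\<bar> \<le> ?K"
  proof (cases "i = m")
    case True
    have S0: "0 \<le> S" using Sh[of 0] Lsum_nonneg[of m 0 A B] Rsum_nonneg[of m 0 A B] by (simp add: Fsum_def)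
    have "0 \<le> Hm m * v * sqrt (real m * S)" using v Hm_nonneg[of m] S0 by simp
    moreover have "0 \<le> real m * Hm m * v\<^sup>2" using Hm_nonneg[of m] by simp
    ultimately show ?thesis using True v by (simp add: Rsum_m)
  next
    case False
    then have im: "i < m" using m by simp
    let ?At = "\<lambda>A j. B (m-j) - A (m-j)"
    have "\<bar>Lsum m (m-1-i) (\<lambda>j. B' (m-j) - A' (m-j)) (\<lambda>j. B' (m-j)) - Lsum m (m-1-i) (\<lambda>j. B (m-j) - A (m-j)) (\<lambda>j. B (m-j))\<bar> \<le> ?K"
    proof (rule core_left[OF m(1) _ v])
      show "m - 1 - i \<le> m" by simp
      show "\<And>j. j \<le> m - 1 - i \<Longrightarrow> 0 \<le> B (m-j) \<and> B (m-j) \<le> 1" using Bnn by simp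
      show "\<And>j. j \<le> m - 1 - i \<Longrightarrow> \<bar>(B' (m-j) - A' (m-j)) - (B (m-j) - A (m-j))\<bar> \<le> 2 * (2 * sqrt (B (m-j)) * v + 2 * v\<^sup>2)"
      proof -
        fix j assume "j \<le> m - 1 - i"
        have "m - j \<le> m" by simp
        note h = dA[OF this] dB[OF this]
        have gen: "\<And>a a' b b' e::real. \<bar>a' - a\<bar> \<le> e \<Longrightarrow> \<bar>b' - b\<bar> \<le> e \<Longrightarrow> \<bar>(b' - a') - (b - a)\<bar> \<le> 2 * e"
          by linarith
        from gen[OF h] show "\<bar>(B' (m-j) - A' (m-j)) - (B (m-j) - A (m-j))\<bar> \<le> 2 * (2 * sqrt (B (m-j)) * v + 2 * v\<^sup>2)" .
      qed
      show "\<And>j. j \<le> m - 1 - i \<Longrightarrow> \<bar>B' (m-j) - B (m-j)\<bar> \<le> 2 * sqrt (B (m-j)) * v + 2 * v\<^sup>2"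
        using dB by simp
      show "Lsum m r (\<lambda>j. B (m-j) - A (m-j)) (\<lambda>j. B (m-j)) \<le> S" if r: "r \<le> m - 1 - i" for r
      proof -
        have rm: "m - 1 - r < m" using m by simp
        have "m - 1 - (m - 1 - r) = r" using r im by simp
        then have "Lsum m r (\<lambda>j. B (m-j) - A (m-j)) (\<lambda>j. B (m-j)) = Rsum m (m - 1 - r) A B"
          using Rsum_refl[OF rm, of A B] by simp
        also have "\<dots> \<le> Fsum m (m - 1 - r) A B" using Lsum_nonneg by (simp add: Fsum_def)
        also have "\<dots> \<le> S" by (rule Sh) simp
        finally show ?thesis .
      qed
    qed
    then show ?thesis using Rsum_refl[OF im, of A B] Rsum_refl[OF im, of A' B'] by simp
  qed
  show ?thesis using L R unfolding Fsum_def by linarith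
qed

lemma Max_diff_le:
  fixes f g :: "nat \<Rightarrow> real"
  assumes "finite I" "I \<noteq> {}" "\<And>i. i \<in> I \<Longrightarrow> \<bar>f i - g i\<bar> \<le> D"
  shows "\<bar>Max (f ` I) - Max (g ` I)\<bar> \<le> D"
proof -
  have "Max (f ` I) \<in> f ` I" using assms by (intro Max_in) auto
  then obtain a where a: "a \<in> I" "Max (f ` I) = f a" by auto
  have "Max (g ` I) \<in> g ` I" using assms by (intro Max_in) auto
  then obtain b where b: "b \<in> I" "Max (g ` I) = g b" by auto
  have "g a \<le> g b" using b a assms Max_ge[of "g ` I" "g a"] by simp
  moreover have "f b \<le> f a" using b a assms Max_ge[of "f ` I" "f b"] by simp
  ultimately show ?thesis using assms(3)[OF a(1)] assms(3)[OF b(1)] a b by linarith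
qed

definition Aof :: "nat \<Rightarrow> nat \<Rightarrow> (nat \<Rightarrow> real) \<Rightarrow> (nat \<Rightarrow> real) \<Rightarrow> nat \<Rightarrow> real" where
  "Aof m T p y j = (\<Sum>t<T. wt m j (p t) * y t) / real T"

lemma Aof_bounds:
  assumes y: "\<forall>t<T. y t \<in> {0,1}"
  shows "0 \<le> Aof m T p y j" "Aof m T p y j \<le> piw m T p j"
proof -
  have a: "0 \<le> wt m j (p t) * y t" if "t < T" for t using y that wt_nonneg[of m j "p t"] by auto
  have b: "wt m j (p t) * y t \<le> wt m j (p t)" if "t < T" for t using y that wt_nonneg[of m j "p t"] by auto
  show "0 \<le> Aof m T p y j" unfolding Aof_def using a by (intro divide_nonneg_nonneg sum_nonneg) auto
  show "Aof m T p y j \<le> piw m T p j" unfolding Aof_def piw_def using b by (intro divide_right_mono sum_mono) auto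
qed

lemma piw_bounds:
  shows "0 \<le> piw m T p j" "piw m T p j \<le> 1"
proof -
  show "0 \<le> piw m T p j" unfolding piw_def by (intro divide_nonneg_nonneg sum_nonneg) (auto simp: wt_nonneg)
  have "(\<Sum>t<T. wt m j (p t)) \<le> (\<Sum>t<T. 1)" by (intro sum_mono) (simp add: wt_le1)
  then show "piw m T p j \<le> 1" unfolding piw_def by (cases "T = 0") (auto simp: field_simps)
qed

lemma term_eq:
  fixes A B c :: real
  assumes "0 \<le> A" "A \<le> B"
  shows "B * max ((if B = 0 then 0 else A / B) - c) 0 = max (A - c * B) 0"
    and "B * max (c - (if B = 0 then 0 else A / B)) 0 = max (c * B - A) 0"
proof -
  show "B * max ((if B = 0 then 0 else A / B) - c) 0 = max (A - c * B) 0"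
  proof (cases "B = 0")
    case True then show ?thesis using assms by simp
  next
    case False
    then have Bp: "B > 0" using assms by simp
    have "B * max (A / B - c) 0 = max (B * (A / B - c)) 0" using Bp by (simp add: max_mult_distrib_left)
    also have "B * (A / B - c) = A - c * B" using Bp by (simp add: field_simps)
    finally show ?thesis using False by simp
  qed
  show "B * max (c - (if B = 0 then 0 else A / B)) 0 = max (c * B - A) 0"
  proof (cases "B = 0")
    case True then show ?thesis using assms by simp
  next
    case False
    then have Bp: "B > 0" using assms by simp
    have "B * max (c - A / B) 0 = max (B * (c - A / B)) 0" using Bp by (simp add: max_mult_distrib_left)
    also have "B * (c - A / B) = c * B - A" using Bp by (simp add: field_simps)
    finally show ?thesis using False by simp
  qed
qed

lemma SCDL_eq:
  assumes y: "\<forall>t<T. y t \<in> {0,1}"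
  shows "SCDL m T p y = Max ((\<lambda>i. Fsum m i (Aof m T p y) (piw m T p)) ` {0..m})"
proof -
  have qw: "qw m T p y j = (if piw m T p j = 0 then 0 else Aof m T p y j / piw m T p j)" for j
    by (simp add: qw_def Aof_def)
  have "(\<Sum>j\<in>{0..i}. piw m T p j * max (qw m T p y j - real (i+1) / real m) 0)
      + (\<Sum>j\<in>{i+1..m}. piw m T p j * max (real i / real m - qw m T p y j) 0)
      = Fsum m i (Aof m T p y) (piw m T p)" for i
    unfolding Fsum_def Lsum_def Rsum_def qw
    using term_eq[OF Aof_bounds[OF y]] by simp
  then show ?thesis unfolding SCDL_def by simp
qed

lemma dev_scale:
  fixes X mu nu L :: real
  assumes T: "T > 0" and "0 \<le> nu" "0 \<le> L" "\<bar>X - mu\<bar> \<le> 2 * sqrt (nu * L) + 2 * L"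
  shows "\<bar>X / real T - mu / real T\<bar> \<le> 2 * sqrt (nu / real T) * sqrt (L / real T) + 2 * (sqrt (L / real T))\<^sup>2"
proof -
  have "\<bar>X / real T - mu / real T\<bar> = \<bar>X - mu\<bar> / real T" using T by (simp add: diff_divide_distrib[symmetric])
  also have "\<dots> \<le> (2 * sqrt (nu * L) + 2 * L) / real T" using assms by (intro divide_right_mono) auto
  also have "\<dots> = 2 * (sqrt (nu * L) / real T) + 2 * (L / real T)" by (simp add: add_divide_distrib)
  also have "sqrt (nu * L) / real T = sqrt (nu / real T) * sqrt (L / real T)"
  proof -
    have "sqrt (nu / real T) * sqrt (L / real T) = sqrt (nu * L / (real T)\<^sup>2)"
      by (simp add: real_sqrt_mult[symmetric] power2_eq_square)
    also have "\<dots> = sqrt (nu * L) / real T" using T by (simp add: real_sqrt_divide)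
    finally show ?thesis by simp
  qed
  finally have h: "\<bar>X / real T - mu / real T\<bar> \<le> 2 * (sqrt (nu / real T) * sqrt (L / real T)) + 2 * (L / real T)" .
  have sq: "(sqrt (L / real T))\<^sup>2 = L / real T" using assms by simp
  show ?thesis unfolding sq mult.assoc by (rule h)
qed

lemma Fsum_m1:
  assumes "\<And>j. 0 \<le> A j" "\<And>j. A j \<le> B j" "i \<le> 1"
  shows "Fsum 1 i A B = 0"
proof -
  have "i = 0 \<or> i = 1" using assms by auto
  then show ?thesis
  proof
    assume "i = 0"
    then show ?thesis using assms(1)[of 0] assms(2)[of 0] assms(1)[of 1]
      by (simp add: Fsum_def Lsum_def Rsum_def)
  next
    assume i: "i = 1"
    have "{0..1::nat} = {0,1}" by auto
    then show ?thesis using i assms(1)[of 0] assms(2)[of 0] assms(1)[of 1] assms(2)[of 1]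
      by (simp add: Fsum_def Lsum_def Rsum_def)
  qed
qed

lemma SCDL_m1:
  assumes y: "\<forall>t<T. y t \<in> {0,1}"
  shows "SCDL 1 T p y = 0"
proof -
  have "(\<lambda>i. Fsum 1 i (Aof 1 T p y) (piw 1 T p)) ` {0..1} = {0}"
    using Fsum_m1[OF Aof_bounds(1)[OF y] Aof_bounds(2)[OF y]] by auto
  then show ?thesis using SCDL_eq[OF y, of 1 p] by simp
qed

lemma Hm_ln: assumes "2 \<le> m" shows "Hm m \<le> 3 * ln (real m)"
proof -
  have h: "Hm m = harm m" unfolding Hm_def harm_def by (simp add: inverse_eq_divide)
  have "harm m - ln (real m) \<le> harm 1 - ln (real (1::nat))"
    by (rule euler_mascheroni_sequence_decreasing) (use assms in auto)
  moreover have "harm 1 = (1::real)" by (simp add: harm_def)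
  ultimately have h1: "Hm m \<le> 1 + ln (real m)" using h by simp
  have "exp (1/2::real) \<le> 1 + 1/2 + (1/2)\<^sup>2" by (rule exp_bound) auto
  moreover have "(2::real) \<le> real m" using assms by simp
  moreover have "(1/2::real)\<^sup>2 = 1/4" by (simp add: power2_eq_square)
  ultimately have e: "exp (1/2::real) \<le> real m" by linarith
  have "ln (exp (1/2::real)) \<le> ln (real m)"
    using e assms by (subst ln_le_cancel_iff) auto
  then have "1/2 \<le> ln (real m)" by simp
  then show ?thesis using h1 by linarith
qed

lemma wt01:
  assumes "m > 0" "p \<in> {0..1}" "x \<in> set_pmf (tau m p)"
  shows "wt m j x = 0 \<or> wt m j x = 1"
proof -
  obtain i where "x = real i / real m" using set_tau[OF assms(2)] assms(3) by auto
  then show ?thesis using wt_grid[OF assms(1)] by simp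
qed

lemma SCDL_nonneg:
  assumes y: "\<forall>t<T. y t \<in> {0,1}"
  shows "0 \<le> SCDL m T p y"
proof -
  have a: "Fsum m 0 (Aof m T p y) (piw m T p) \<le> Max ((\<lambda>i. Fsum m i (Aof m T p y) (piw m T p)) ` {0..m})"
    by (intro Max_ge) auto
  have b: "0 \<le> Fsum m 0 (Aof m T p y) (piw m T p)"
    using Lsum_nonneg Rsum_nonneg by (simp add: Fsum_def add_nonneg_nonneg)
  show ?thesis unfolding SCDL_eq[OF y] using a b by linarith
qed

lemma good_bound:
  fixes T m :: nat and p y x :: "nat \<Rightarrow> real" and L v S :: real
  assumes T: "T > 0" and m: "2 \<le> m" and L: "0 < L" and v: "v = sqrt (L / real T)"
    and y: "\<forall>t<T. y t \<in> {0,1}"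
    and S: "S = SCDL m T p y"
    and gB: "\<And>j. j \<le> m \<Longrightarrow> \<bar>(\<Sum>t<T. wt m j (x t)) - (\<Sum>t<T. wt m j (p t))\<bar> \<le> 2 * sqrt ((\<Sum>t<T. wt m j (p t)) * L) + 2 * L"
    and gA: "\<And>j. j \<le> m \<Longrightarrow> \<bar>(\<Sum>t<T. y t * wt m j (x t)) - (\<Sum>t<T. y t * wt m j (p t))\<bar> \<le> 2 * sqrt ((\<Sum>t<T. y t * wt m j (p t)) * L) + 2 * L"
  shows "\<bar>SCDL m T x y - S\<bar> \<le> 672 * (v + Hm m * v * sqrt (real m * S) + real m * Hm m * v\<^sup>2)"
proof -
  let ?A = "Aof m T p y" and ?B = "piw m T p" and ?A' = "Aof m T x y" and ?B' = "piw m T x"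
  have m1: "1 \<le> m" using m by simp
  have v0: "0 \<le> v" using v L by simp
  have dB: "\<bar>?B' j - ?B j\<bar> \<le> 2 * sqrt (?B j) * v + 2 * v\<^sup>2" if j: "j \<le> m" for j
  proof -
    have "\<bar>(\<Sum>t<T. wt m j (x t)) / real T - (\<Sum>t<T. wt m j (p t)) / real T\<bar>
       \<le> 2 * sqrt ((\<Sum>t<T. wt m j (p t)) / real T) * sqrt (L / real T) + 2 * (sqrt (L / real T))\<^sup>2"
      by (rule dev_scale[OF T _ _ gB[OF j]]) (use L in \<open>auto intro: sum_nonneg simp: wt_nonneg\<close>)
    then show ?thesis by (simp add: piw_def v)
  qed
  have dA: "\<bar>?A' j - ?A j\<bar> \<le> 2 * sqrt (?B j) * v + 2 * v\<^sup>2" if j: "j \<le> m" for j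
  proof -
    have le: "(\<Sum>t<T. y t * wt m j (p t)) \<le> (\<Sum>t<T. wt m j (p t))"
      using y wt_nonneg[of m j] by (intro sum_mono) auto
    have "2 * sqrt ((\<Sum>t<T. y t * wt m j (p t)) * L) + 2 * L \<le> 2 * sqrt ((\<Sum>t<T. wt m j (p t)) * L) + 2 * L"
      using le L by (simp add: mult_right_mono)
    then have g: "\<bar>(\<Sum>t<T. y t * wt m j (x t)) - (\<Sum>t<T. y t * wt m j (p t))\<bar> \<le> 2 * sqrt ((\<Sum>t<T. wt m j (p t)) * L) + 2 * L"
      using gA[OF j] by linarith
    have "\<bar>(\<Sum>t<T. y t * wt m j (x t)) / real T - (\<Sum>t<T. y t * wt m j (p t)) / real T\<bar>
       \<le> 2 * sqrt ((\<Sum>t<T. wt m j (p t)) / real T) * sqrt (L / real T) + 2 * (sqrt (L / real T))\<^sup>2"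
      by (rule dev_scale[OF T _ _ g]) (use L in \<open>auto intro: sum_nonneg simp: wt_nonneg\<close>)
    then show ?thesis by (simp add: piw_def Aof_def v mult.commute)
  qed
  have Bnn: "0 \<le> ?B j \<and> ?B j \<le> 1" for j using piw_bounds by auto
  have Sh: "Fsum m r ?A ?B \<le> S" if "r \<le> m" for r
  proof -
    have "Fsum m r ?A ?B \<le> Max ((\<lambda>i. Fsum m i ?A ?B) ` {0..m})" using that by (intro Max_ge) auto
    then show ?thesis using SCDL_eq[OF y] S by simp
  qed
  have "\<bar>Max ((\<lambda>i. Fsum m i ?A' ?B') ` {0..m}) - Max ((\<lambda>i. Fsum m i ?A ?B) ` {0..m})\<bar>
      \<le> 672 * (v + Hm m * v * sqrt (real m * S) + real m * Hm m * v\<^sup>2)"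
  proof (rule Max_diff_le)
    fix i assume "i \<in> {0..m}"
    then have i: "i \<le> m" by simp
    show "\<bar>Fsum m i ?A' ?B' - Fsum m i ?A ?B\<bar> \<le> 672 * (v + Hm m * v * sqrt (real m * S) + real m * Hm m * v\<^sup>2)"
      by (rule core_both[OF m1 i v0 Bnn dA dB Sh])
  qed auto
  then show ?thesis using SCDL_eq[OF y, of m x] SCDL_eq[OF y, of m p] S by simp
qed

lemma final_arith:
  fixes m T :: nat and l S v :: real
  assumes m: "2 \<le> m" and T: "T > 0" and l: "0 < l" and S: "0 \<le> S" and v: "v = sqrt (3 * l / real T)"
  shows "672 * (v + Hm m * v * sqrt (real m * S) + real m * Hm m * v\<^sup>2)
     \<le> 6048 * (sqrt (l / real T) + ln (real m) * sqrt (real m * S * l / real T) + real m * ln (real m) * l / real T)"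
proof -
  define w where "w = sqrt (l / real T)"
  define X where "X = sqrt (real m * S)"
  define lm where "lm = ln (real m)"
  have w0: "0 \<le> w" using l T by (simp add: w_def)
  have X0: "0 \<le> X" using S by (simp add: X_def)
  have lm0: "0 \<le> lm" using m by (simp add: lm_def)
  have H0: "0 \<le> Hm m" by (rule Hm_nonneg)
  have H3: "Hm m \<le> 3 * lm" using Hm_ln[OF m] by (simp add: lm_def)
  have vw: "v = sqrt 3 * w" unfolding v w_def by (simp add: real_sqrt_mult[symmetric])
  have s3: "sqrt 3 \<le> (2::real)"
  proof -
    show ?thesis by (rule real_le_lsqrt) auto
  qed
  have v2w: "v \<le> 2 * w" unfolding vw using s3 w0 by (intro mult_right_mono)
  have v0: "0 \<le> v" using vw w0 by simp
  have vsq: "v\<^sup>2 = 3 * (l / real T)" using v l T by simp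
  have XW: "sqrt (real m * S * l / real T) = X * w" unfolding X_def w_def
    by (simp add: real_sqrt_mult[symmetric])
  have t2: "Hm m * v * X \<le> (3 * lm) * (2 * w) * X"
    using H3 v2w H0 v0 X0 lm0 by (intro mult_right_mono mult_mono) auto
  have t3: "real m * Hm m * v\<^sup>2 \<le> real m * (3 * lm) * (3 * (l / real T))"
    unfolding vsq using H3 H0 l T by (intro mult_right_mono mult_left_mono) auto
  have e1: "real m * lm * l / real T = real m * lm * (l / real T)" by simp
  have "672 * (v + Hm m * v * X + real m * Hm m * v\<^sup>2) \<le> 672 * (2 * w + (3 * lm) * (2 * w) * X + real m * (3 * lm) * (3 * (l / real T)))"
    using v2w t2 t3 by simp
  also have "\<dots> = 6048 * ((2/9) * w + (2/3) * (lm * (X * w)) + real m * lm * (l / real T))"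
    by (simp add: algebra_simps)
  also have "\<dots> \<le> 6048 * (w + lm * (X * w) + real m * lm * (l / real T))"
  proof -
    have a: "0 \<le> lm * (X * w)" using lm0 X0 w0 by simp
    have b: "(2/9) * w \<le> w" using w0 by simp
    have c: "(2/3) * (lm * (X * w)) \<le> lm * (X * w)" using a by linarith
    have gen: "\<And>a b c d e::real. a \<le> b \<Longrightarrow> c \<le> d \<Longrightarrow> 6048 * (a + c + e) \<le> 6048 * (b + d + e)" by (intro mult_left_mono add_mono) auto
    show ?thesis by (rule gen[OF b c])
  qed
  finally show ?thesis unfolding X_def[symmetric] w_def[symmetric] XW lm_def[symmetric] e1 .
qed

lemma bad_prob:
  fixes T m :: nat and p y :: "nat \<Rightarrow> real" and L :: real
  assumes m: "m > 0" and pp: "\<And>t. t < T \<Longrightarrow> p t \<in> {0..1}" and y: "\<forall>t<T. y t \<in> {0,1}" and L: "0 < L"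
  shows "measure_pmf.prob (Pi_pmf {..<T} 0 (\<lambda>t. tau m (p t)))
     ((\<Union>j\<in>{..m}. {x. \<bar>(\<Sum>t<T. y t * wt m j (x t)) - (\<Sum>t<T. y t * wt m j (p t))\<bar> \<ge> 2 * sqrt ((\<Sum>t<T. y t * wt m j (p t)) * L) + 2 * L})
    \<union> (\<Union>j\<in>{..m}. {x. \<bar>(\<Sum>t<T. wt m j (x t)) - (\<Sum>t<T. wt m j (p t))\<bar> \<ge> 2 * sqrt ((\<Sum>t<T. wt m j (p t)) * L) + 2 * L}))
    \<le> 4 * (real m + 1) * exp (- L)"
proof -
  let ?M = "Pi_pmf {..<T} 0 (\<lambda>t. tau m (p t))"
  let ?bA = "\<lambda>j. {x. \<bar>(\<Sum>t<T. y t * wt m j (x t)) - (\<Sum>t<T. y t * wt m j (p t))\<bar> \<ge> 2 * sqrt ((\<Sum>t<T. y t * wt m j (p t)) * L) + 2 * L}"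
  let ?bB = "\<lambda>j. {x. \<bar>(\<Sum>t<T. wt m j (x t)) - (\<Sum>t<T. wt m j (p t))\<bar> \<ge> 2 * sqrt ((\<Sum>t<T. wt m j (p t)) * L) + 2 * L}"
  have fin: "\<And>t. t < T \<Longrightarrow> finite (set_pmf (tau m (p t)))" using finite_tau pp by blast
  have e: "measure_pmf.expectation (tau m (p t)) (wt m j) = wt m j (p t)" if "t < T" "j \<le> m" for t j
    using exp_tau_wt[OF pp[OF that(1)] m that(2), of 1] by simp
  have PA: "measure_pmf.prob ?M (?bA j) \<le> 2 * exp (- L)" if j: "j \<le> m" for j
  proof (rule chernoff[OF fin _ _ L])
    show "\<And>t x. t < T \<Longrightarrow> x \<in> set_pmf (tau m (p t)) \<Longrightarrow> y t * wt m j x = 0 \<or> y t * wt m j x = 1"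
      using wt01[OF m pp] y by fastforce
    show "(\<Sum>t<T. y t * wt m j (p t)) = (\<Sum>t<T. measure_pmf.expectation (tau m (p t)) (\<lambda>x. y t * wt m j x))"
      by (intro sum.cong refl) (simp add: e j)
  qed
  have PB: "measure_pmf.prob ?M (?bB j) \<le> 2 * exp (- L)" if j: "j \<le> m" for j
  proof (rule chernoff[OF fin _ _ L])
    show "\<And>t x. t < T \<Longrightarrow> x \<in> set_pmf (tau m (p t)) \<Longrightarrow> wt m j x = 0 \<or> wt m j x = 1"
      using wt01[OF m pp] by blast
    show "(\<Sum>t<T. wt m j (p t)) = (\<Sum>t<T. measure_pmf.expectation (tau m (p t)) (\<lambda>x. wt m j x))"
      by (intro sum.cong refl) (simp add: e j)
  qed
  have "measure_pmf.prob ?M ((\<Union>j\<in>{..m}. ?bA j) \<union> (\<Union>j\<in>{..m}. ?bB j))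
     \<le> measure_pmf.prob ?M (\<Union>j\<in>{..m}. ?bA j) + measure_pmf.prob ?M (\<Union>j\<in>{..m}. ?bB j)"
    by (rule measure_Un_le) auto
  also have "measure_pmf.prob ?M (\<Union>j\<in>{..m}. ?bA j) \<le> (\<Sum>j\<in>{..m}. measure_pmf.prob ?M (?bA j))"
    by (rule measure_UNION_le) auto
  also have "\<dots> \<le> (\<Sum>j\<in>{..m}. 2 * exp (- L))" using PA by (intro sum_mono) auto
  also have "measure_pmf.prob ?M (\<Union>j\<in>{..m}. ?bB j) \<le> (\<Sum>j\<in>{..m}. measure_pmf.prob ?M (?bB j))"
    by (rule measure_UNION_le) auto
  also have "\<dots> \<le> (\<Sum>j\<in>{..m}. 2 * exp (- L))" using PB by (intro sum_mono) auto
  finally show ?thesis by (simp add: algebra_simps)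
qed

lemma main_lemma:
  fixes T m :: nat and p y :: "nat \<Rightarrow> real" and \<delta> :: real
  assumes T: "T > 0" and py: "\<forall>t<T. p t \<in> {0..1} \<and> y t \<in> {0,1}" and m: "m > 0"
    and d0: "0 < \<delta>" and d1: "\<delta> < 1 / (2 * real m)"
  shows "measure_pmf.prob (Pi_pmf {..<T} 0 (\<lambda>t. tau m (p t)))
          {p'. \<bar>SCDL m T p' y - SCDL m T p y\<bar> \<le>
               6048 * (sqrt (ln (1/\<delta>) / real T)
                    + ln (real m) * sqrt (real m * SCDL m T p y * ln (1/\<delta>) / real T)
                    + real m * ln (real m) * ln (1/\<delta>) / real T)}
        \<ge> 1 - \<delta>"
proof -
  have y: "\<forall>t<T. y t \<in> {0,1}" using py by auto
  have pp: "\<And>t. t < T \<Longrightarrow> p t \<in> {0..1}" using py by auto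
  define l where "l = ln (1/\<delta>)"
  define S where "S = SCDL m T p y"
  let ?M = "Pi_pmf {..<T} 0 (\<lambda>t. tau m (p t))"
  let ?G = "{p'. \<bar>SCDL m T p' y - S\<bar> \<le> 6048 * (sqrt (l / real T) + ln (real m) * sqrt (real m * S * l / real T) + real m * ln (real m) * l / real T)}"
  have md: "2 * real m * \<delta> < 1" using d1 m d0 by (simp add: field_simps)
  have d2: "\<delta> < 1"
  proof -
    have "2 * 1 * \<delta> \<le> 2 * real m * \<delta>" using m d0 by (intro mult_right_mono) auto
    then show ?thesis using md by linarith
  qed
  have l0: "0 < l" unfolding l_def using d0 d2 by (simp add: ln_div)
  have S0: "0 \<le> S" unfolding S_def by (rule SCDL_nonneg[OF y])
  have "measure_pmf.prob ?M ?G \<ge> 1 - \<delta>"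
  proof (cases "m = 1")
    case True
    have "?G = UNIV"
    proof -
      have "SCDL m T x y = 0" for x using SCDL_m1[OF y] True by simp
      moreover have "0 \<le> sqrt (l / real T)" using l0 by simp
      ultimately show ?thesis using True S_def by auto
    qed
    then show ?thesis using d0 by simp
  next
    case False
    then have m2: "2 \<le> m" using m by simp
    define L where "L = 3 * l"
    define v where "v = sqrt (L / real T)"
    have L0: "0 < L" using l0 by (simp add: L_def)
    let ?bad = "(\<Union>j\<in>{..m}. {x. \<bar>(\<Sum>t<T. y t * wt m j (x t)) - (\<Sum>t<T. y t * wt m j (p t))\<bar> \<ge> 2 * sqrt ((\<Sum>t<T. y t * wt m j (p t)) * L) + 2 * L})
    \<union> (\<Union>j\<in>{..m}. {x. \<bar>(\<Sum>t<T. wt m j (x t)) - (\<Sum>t<T. wt m j (p t))\<bar> \<ge> 2 * sqrt ((\<Sum>t<T. wt m j (p t)) * L) + 2 * L})"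
    have Pbad: "measure_pmf.prob ?M ?bad \<le> 4 * (real m + 1) * exp (- L)"
      by (rule bad_prob[OF m pp y L0])
    have eL: "exp (- L) = \<delta> ^ 3"
    proof -
      have "- L = real 3 * ln \<delta>" using d0 by (simp add: L_def l_def ln_div)
      then have "exp (- L) = exp (ln \<delta>) ^ 3" by (simp only: exp_of_nat_mult)
      then show ?thesis using d0 by simp
    qed
    have small: "4 * (real m + 1) * \<delta> ^ 3 \<le> \<delta>"
    proof -
      have "(2 * real m * \<delta>)\<^sup>2 < 1" using md d0 m
        by (metis abs_of_nonneg less_eq_real_def mult_nonneg_nonneg of_nat_0_le_iff pos2 power_less_one_iff zero_le_numeral abs_square_less_1 )
      then have a: "4 * (real m)\<^sup>2 * \<delta>\<^sup>2 < 1" by (simp add: power_mult_distrib)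
      have "real m + 1 \<le> (real m)\<^sup>2"
      proof -
        have h1: "2 * real m \<le> real m * real m" using m2 by (intro mult_right_mono) auto
        have h2: "1 \<le> real m" using m2 by simp
        show ?thesis unfolding power2_eq_square using h1 h2 by linarith
      qed
      then have "4 * (real m + 1) * \<delta>\<^sup>2 \<le> 4 * (real m)\<^sup>2 * \<delta>\<^sup>2" by (intro mult_right_mono) auto
      then have "4 * (real m + 1) * \<delta>\<^sup>2 \<le> 1" using a by linarith
      then have "(4 * (real m + 1) * \<delta>\<^sup>2) * \<delta> \<le> 1 * \<delta>" using d0 by (intro mult_right_mono) auto
      then show ?thesis by (simp add: power2_eq_square power3_eq_cube algebra_simps)
    qed
    have Pbad2: "measure_pmf.prob ?M ?bad \<le> \<delta>" using Pbad small eL by simp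
    have sub: "UNIV - ?bad \<subseteq> ?G"
    proof
      fix x assume "x \<in> UNIV - ?bad"
      then have gA: "\<And>j. j \<le> m \<Longrightarrow> \<bar>(\<Sum>t<T. y t * wt m j (x t)) - (\<Sum>t<T. y t * wt m j (p t))\<bar> \<le> 2 * sqrt ((\<Sum>t<T. y t * wt m j (p t)) * L) + 2 * L"
        and gB: "\<And>j. j \<le> m \<Longrightarrow> \<bar>(\<Sum>t<T. wt m j (x t)) - (\<Sum>t<T. wt m j (p t))\<bar> \<le> 2 * sqrt ((\<Sum>t<T. wt m j (p t)) * L) + 2 * L"
        by (auto simp: not_le less_imp_le)
      have "\<bar>SCDL m T x y - S\<bar> \<le> 672 * (v + Hm m * v * sqrt (real m * S) + real m * Hm m * v\<^sup>2)"
        by (rule good_bound[OF T m2 L0 v_def y S_def gB gA])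
      also have "\<dots> \<le> 6048 * (sqrt (l / real T) + ln (real m) * sqrt (real m * S * l / real T) + real m * ln (real m) * l / real T)"
        by (rule final_arith[OF m2 T l0 S0]) (simp add: v_def L_def)
      finally show "x \<in> ?G" by simp
    qed
    have "1 - \<delta> \<le> 1 - measure_pmf.prob ?M ?bad" using Pbad2 by simp
    also have "\<dots> = measure_pmf.prob ?M (UNIV - ?bad)"
      using measure_pmf.prob_compl[of ?bad ?M] by simp
    also have "\<dots> \<le> measure_pmf.prob ?M ?G"
      by (rule measure_pmf.finite_measure_mono[OF sub]) simp
    finally show ?thesis .
  qed
  then show ?thesis by (simp add: l_def S_def)
qed

theorem lemma7p4:
  shows "\<exists>C>0. \<forall>(T::nat) (p::nat \<Rightarrow> real) (y::nat \<Rightarrow> real) (m::nat) (\<delta>::real).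
    T > 0 \<and> (\<forall>t<T. p t \<in> {0..1} \<and> y t \<in> {0,1}) \<and> m > 0 \<and> 0 < \<delta> \<and> \<delta> < 1 / (2 * real m)
    \<longrightarrow> measure_pmf.prob (Pi_pmf {..<T} 0 (\<lambda>t. tau m (p t)))
          {p'. \<bar>SCDL m T p' y - SCDL m T p y\<bar> \<le>
               C * (sqrt (ln (1/\<delta>) / real T)
                    + ln (real m) * sqrt (real m * SCDL m T p y * ln (1/\<delta>) / real T)
                    + real m * ln (real m) * ln (1/\<delta>) / real T)}
        \<ge> 1 - \<delta>"
  apply (rule exI[of _ 6048])
  apply (intro conjI allI impI)
   apply simp
  apply (elim conjE)
  apply (rule main_lemma)
      apply assumption+
  done

end
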